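(* Let \(E\) be a semilattice with unit and zero. Open subsets of \(\hat E\) correspond bijectively to ideals in \(E\). To an open subset \(A\subseteq\hat E\) corresponds the ideal \(I_A=\{e\in E:U_e\subseteq A\}\). To an ideal \(I\) corresponds the open subset \(A_I=\{\varphi\in\hat E:\varphi(e)=1\text{ for some }e\in I\}=\bigcup_{e\in I}U_e\).
   Context: A semilattice is a commutative semigroup of idempotents with unit \(1\) and zero \(0\), ordered by \(e\le f\iff ef=e\). An ideal in \(E\) is a subset \(I\subseteq E\) containing \(0\) such that \(ef\in I\) whenever \(e\in E\) and \(f\in I\) (equivalently, \(e\in I\) whenever \(f\in I\) and \(e\le f\)). A character on \(E\) is a map \(\varphi\colon E\to\{0,1\}\) with \(\varphi(0)=0\), \(\varphi(1)=1\), \(\varphi(ef)=\varphi(e)\varphi(f)\). \(\hat E\) is the set of characters, \(U_e=\{\varphi:\varphi(e)=1\}\), and \(\hat E\) carries the topology generated by the sets \(U_e\). *)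

theory Defs
  imports "HOL-Analysis.Analysis"
begin

text \<open>A semilattice with unit and zero is modelled by the type class
  semilattice_inf + order_bot + order_top: the product e f is inf e f,
  the unit 1 is top, the zero 0 is bot, and e \<le> f iff inf e f = e.\<close>

definition sl_character :: "('a::{semilattice_inf,order_bot,order_top} \<Rightarrow> nat) \<Rightarrow> bool" where
  "sl_character \<phi> \<longleftrightarrow> (\<forall>e. \<phi> e \<in> {0,1}) \<and> \<phi> bot = 0 \<and> \<phi> top = 1 \<and>
     (\<forall>e f. \<phi> (inf e f) = \<phi> e * \<phi> f)"

definition sl_characters :: "('a::{semilattice_inf,order_bot,order_top} \<Rightarrow> nat) set" where
  "sl_characters = {\<phi>. sl_character \<phi>}"

definition U_set :: "'a::{semilattice_inf,order_bot,order_top} \<Rightarrow> ('a \<Rightarrow> nat) set" where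
  "U_set e = {\<phi> \<in> sl_characters. \<phi> e = 1}"

definition char_topology :: "('a::{semilattice_inf,order_bot,order_top} \<Rightarrow> nat) topology" where
  "char_topology = topology_generated_by (range U_set)"

definition sl_ideal :: "'a::{semilattice_inf,order_bot,order_top} set \<Rightarrow> bool" where
  "sl_ideal I \<longleftrightarrow> bot \<in> I \<and> (\<forall>e f. f \<in> I \<longrightarrow> inf e f \<in> I)"

definition ideal_of_open :: "('a::{semilattice_inf,order_bot,order_top} \<Rightarrow> nat) set \<Rightarrow> 'a set" where
  "ideal_of_open A = {e. U_set e \<subseteq> A}"

definition open_of_ideal :: "'a::{semilattice_inf,order_bot,order_top} set \<Rightarrow> ('a \<Rightarrow> nat) set" where
  "open_of_ideal I = {\<phi> \<in> sl_characters. \<exists>e\<in>I. \<phi> e = 1}"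

end

theory Submission
  imports Defs
begin

lemma U_inf: "U_set (inf e f) = U_set e \<inter> U_set f"
proof -
  have "\<And>\<phi>. \<phi> \<in> sl_characters \<Longrightarrow> (\<phi> (inf e f) = 1) = (\<phi> e = 1 \<and> \<phi> f = 1)"
    by (simp add: sl_characters_def sl_character_def)
  thus ?thesis unfolding U_set_def by auto
qed

lemma U_bot: "U_set bot = {}"
  by (auto simp: U_set_def sl_characters_def sl_character_def)

lemma U_sub: "U_set e \<subseteq> sl_characters"
  by (auto simp: U_set_def)

lemma gen_prop:
  assumes "generate_topology_on (range U_set) A"
  shows "A \<subseteq> sl_characters \<and> (\<forall>\<phi>\<in>A. \<exists>e. \<phi> \<in> U_set e \<and> U_set e \<subseteq> A)"
  using assms
proof (induction rule: generate_topology_on.induct)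
  case Empty then show ?case by simp
next
  case (Int a b)
  show ?case
  proof (intro conjI ballI)
    show "a \<inter> b \<subseteq> sl_characters" using Int by blast
    fix \<phi> assume "\<phi> \<in> a \<inter> b"
    then obtain e f where "\<phi> \<in> U_set e" "U_set e \<subseteq> a" "\<phi> \<in> U_set f" "U_set f \<subseteq> b"
      using Int by blast
    then show "\<exists>e. \<phi> \<in> U_set e \<and> U_set e \<subseteq> a \<inter> b"
      by (intro exI[of _ "inf e f"]) (auto simp: U_inf)
  qed
next
  case (UN K)
  show ?case
  proof (intro conjI ballI)
    show "\<Union>K \<subseteq> sl_characters" using UN.IH by (simp add: Sup_le_iff)
    fix \<phi> assume "\<phi> \<in> \<Union>K"
    then obtain k where k: "k \<in> K" "\<phi> \<in> k" by blast
    then obtain e where "\<phi> \<in> U_set e" "U_set e \<subseteq> k" using UN.IH[OF k(1)] by blast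
    then show "\<exists>e. \<phi> \<in> U_set e \<and> U_set e \<subseteq> \<Union>K" using k(1) by blast
  qed
next
  case (Basis s) then show ?case using U_sub by auto
qed

lemma open_prop:
  assumes "openin char_topology A"
  shows "A \<subseteq> sl_characters \<and> (\<forall>\<phi>\<in>A. \<exists>e. \<phi> \<in> U_set e \<and> U_set e \<subseteq> A)"
  apply (rule gen_prop)
  using assms unfolding char_topology_def openin_topology_generated_by_iff by simp

lemma ideal_of_open_ideal: "sl_ideal (ideal_of_open A)"
  unfolding sl_ideal_def ideal_of_open_def using U_inf U_bot by auto

lemma open_ideal_open:
  assumes "openin char_topology A"
  shows "open_of_ideal (ideal_of_open A) = A"
proof -
  have h: "A \<subseteq> sl_characters \<and> (\<forall>\<phi>\<in>A. \<exists>e. \<phi> \<in> U_set e \<and> U_set e \<subseteq> A)"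
    by (rule open_prop[OF assms])
  have "open_of_ideal (ideal_of_open A) = (\<Union>e\<in>{e. U_set e \<subseteq> A}. U_set e)"
    unfolding open_of_ideal_def ideal_of_open_def U_set_def by blast
  also have "\<dots> = A" using h by blast
  finally show ?thesis .
qed

lemma open_of_ideal_union: "open_of_ideal I = (\<Union>e\<in>I. U_set e)"
  unfolding open_of_ideal_def U_set_def by auto

lemma open_of_ideal_open: "openin char_topology (open_of_ideal I)"
  unfolding open_of_ideal_union char_topology_def openin_topology_generated_by_iff
  by (rule generate_topology_on.UN) (auto intro: generate_topology_on.Basis)

lemma principal_char:
  fixes e :: "'a::{semilattice_inf,order_bot,order_top}"
  assumes "e \<noteq> bot"
  shows "(\<lambda>x. if e \<le> x then 1 else 0 :: nat) \<in> U_set e"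
  using assms bot_unique unfolding U_set_def sl_characters_def sl_character_def
  by auto

lemma ideal_open_ideal:
  fixes I :: "'a::{semilattice_inf,order_bot,order_top} set"
  assumes "sl_ideal I"
  shows "ideal_of_open (open_of_ideal I) = I"
proof
  show "I \<subseteq> ideal_of_open (open_of_ideal I)"
    unfolding ideal_of_open_def open_of_ideal_union by auto
  show "ideal_of_open (open_of_ideal I) \<subseteq> I"
  proof
    fix e assume e: "e \<in> ideal_of_open (open_of_ideal I)"
    show "e \<in> I"
    proof (cases "e = bot")
      case True then show ?thesis using assms by (simp add: sl_ideal_def)
    next
      case False
      let ?p = "(\<lambda>x. if e \<le> x then 1 else 0 :: nat)"
      have "?p \<in> open_of_ideal I" using principal_char[OF False] e
        unfolding ideal_of_open_def by auto
      then obtain f where "f \<in> I" "?p f = 1" unfolding open_of_ideal_def by auto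
      then have "e \<le> f" by (auto split: if_splits)
      then have "inf e f = e" by (simp add: inf_absorb1)
      moreover have "inf e f \<in> I" using \<open>f \<in> I\<close> assms unfolding sl_ideal_def by blast
      ultimately show ?thesis by simp
    qed
  qed
qed

theorem lemma2p14:
  shows "bij_betw (ideal_of_open :: ('a::{semilattice_inf,order_bot,order_top} \<Rightarrow> nat) set \<Rightarrow> 'a set)
            {A. openin char_topology A} {I. sl_ideal I}
       \<and> (\<forall>A. openin (char_topology :: ('a \<Rightarrow> nat) topology) A \<longrightarrow>
              sl_ideal (ideal_of_open A) \<and> open_of_ideal (ideal_of_open A) = A)
       \<and> (\<forall>I::'a set. sl_ideal I \<longrightarrow>
              openin char_topology (open_of_ideal I) \<and> ideal_of_open (open_of_ideal I) = I
              \<and> open_of_ideal I = (\<Union>e\<in>I. U_set e))"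
proof (intro conjI allI impI)
  show "bij_betw (ideal_of_open :: ('a \<Rightarrow> nat) set \<Rightarrow> 'a set)
            {A. openin char_topology A} {I. sl_ideal I}"
  proof (rule bij_betw_byWitness[where f' = open_of_ideal])
    show "\<forall>a\<in>{A. openin char_topology A}. open_of_ideal (ideal_of_open a) = a"
      by (simp add: open_ideal_open)
    show "\<forall>a'\<in>{I. sl_ideal I}. ideal_of_open (open_of_ideal a') = (a'::'a set)"
      by (simp add: ideal_open_ideal)
    show "ideal_of_open ` {A. openin char_topology A} \<subseteq> {I. sl_ideal (I::'a set)}"
      by (auto simp: ideal_of_open_ideal)
    show "open_of_ideal ` {I. sl_ideal I} \<subseteq> {A. openin char_topology (A::('a\<Rightarrow>nat) set)}"
      by (auto simp: open_of_ideal_open)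
  qed
next
  fix A :: "('a \<Rightarrow> nat) set" assume "openin char_topology A"
  then show "open_of_ideal (ideal_of_open A) = A" by (rule open_ideal_open)
  show "sl_ideal (ideal_of_open A)" by (rule ideal_of_open_ideal)
next
  fix I :: "'a set" assume "sl_ideal I"
  then show "ideal_of_open (open_of_ideal I) = I" by (rule ideal_open_ideal)
  show "openin char_topology (open_of_ideal I)" by (rule open_of_ideal_open)
  show "open_of_ideal I = (\<Union>e\<in>I. U_set e)" by (rule open_of_ideal_union)
qed

end
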